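(* Let $\lambda$ be a nonzero complex constant and let $\psi(q,\bar q,z,\bar z)$ satisfy $$\psi_{q\bar q}\psi_{z\bar z}-\psi_{q\bar z}\psi_{\bar q z}=e^{\psi_q+\psi_{\bar q}}\bigl(\psi_{q\bar q}^2-\psi_{qq}\psi_{\bar q\bar q}\bigr)$$ together with the two constraints $$e^{\psi_{\bar q}}(\psi_{\bar q\bar q}+\psi_{q\bar q})=\lambda\,\psi_{q\bar z},\qquad \lambda\,e^{\psi_q}(\psi_{qq}+\psi_{q\bar q})=\psi_{\bar q z},$$ and assume $\psi_{q\bar q}\neq0$. Then $\psi_{z\bar z}=e^{\psi_q+\psi_{\bar q}}(\psi_{qq}+2\psi_{q\bar q}+\psi_{\bar q\bar q})$; equivalently, writing $q=x+iy$ with $x,y$ real, $\psi_{z\bar z}=e^{\psi_x}\psi_{xx}$ (the Boyer–Finley equation, in which $y$ enters only as a parameter).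
   Context: Subscripts denote partial (Wirtinger) derivatives with respect to $q,\bar q,z,\bar z$, and $\psi_x,\psi_{xx}$ partial derivatives with respect to the real variable $x=(q+\bar q)/2$. The two constraints arise from the partner-symmetry equations of the hyperbolic complex Monge–Ampère equation when the symmetry is the rotational one, $\varphi=i(z_1u_1-\bar z_1u_{\bar1})$, whose Legendre transform is $\Phi=i(q-\bar q)$. *)

theory Defs
  imports "HOL-Analysis.Analysis"
begin

text \<open>A point of C^2 is a pair (q, z). Functions are complex valued on C x C,
regarded as a real vector space of dimension 4.\<close>

definition pd :: "complex \<times> complex \<Rightarrow> (complex \<times> complex \<Rightarrow> complex) \<Rightarrow> complex \<times> complex \<Rightarrow> complex" where
  "pd v f p = vector_derivative (\<lambda>t::real. f (p + t *\<^sub>R v)) (at 0)"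

text \<open>Wirtinger derivatives with respect to q, conj q, z, conj z, and the real
partial derivative with respect to x = Re q.\<close>
definition dq :: "(complex \<times> complex \<Rightarrow> complex) \<Rightarrow> complex \<times> complex \<Rightarrow> complex" where
  "dq f p = (pd (1,0) f p - \<i> * pd (\<i>,0) f p) / 2"

definition dqb :: "(complex \<times> complex \<Rightarrow> complex) \<Rightarrow> complex \<times> complex \<Rightarrow> complex" where
  "dqb f p = (pd (1,0) f p + \<i> * pd (\<i>,0) f p) / 2"

definition dz :: "(complex \<times> complex \<Rightarrow> complex) \<Rightarrow> complex \<times> complex \<Rightarrow> complex" where
  "dz f p = (pd (0,1) f p - \<i> * pd (0,\<i>) f p) / 2"

definition dzb :: "(complex \<times> complex \<Rightarrow> complex) \<Rightarrow> complex \<times> complex \<Rightarrow> complex" where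
  "dzb f p = (pd (0,1) f p + \<i> * pd (0,\<i>) f p) / 2"

definition dx :: "(complex \<times> complex \<Rightarrow> complex) \<Rightarrow> complex \<times> complex \<Rightarrow> complex" where
  "dx f = pd (1,0) f"

definition real_dirs :: "(complex \<times> complex) set" where
  "real_dirs = {(1,0), (\<i>,0), (0,1), (0,\<i>)}"

definition C2_on :: "(complex \<times> complex) set \<Rightarrow> (complex \<times> complex \<Rightarrow> complex) \<Rightarrow> bool" where
  "C2_on U f \<longleftrightarrow> open U \<and> f differentiable_on U \<and>
     (\<forall>v\<in>real_dirs. pd v f differentiable_on U) \<and>
     (\<forall>v\<in>real_dirs. \<forall>w\<in>real_dirs. continuous_on U (pd w (pd v f)))"

end

theory Submission
  imports Defs
begin


lemma ld0:
  fixes G :: "complex \<times> complex \<Rightarrow> complex"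
  assumes hd: "(G has_derivative G') (at (y + s *\<^sub>R u))"
  shows "((\<lambda>t. G (y + t *\<^sub>R u)) has_vector_derivative G' u) (at s)"
proof -
  have l: "((\<lambda>t. y + t *\<^sub>R u) has_derivative (\<lambda>t. t *\<^sub>R u)) (at s)"
    by (auto intro!: derivative_eq_intros)
  have "((\<lambda>t. G (y + t *\<^sub>R u)) has_derivative (\<lambda>t. G' (t *\<^sub>R u))) (at s)"
    using has_derivative_compose[OF l, of G G'] hd by simp
  moreover have "\<And>t. G' (t *\<^sub>R u) = t *\<^sub>R G' u"
    using has_derivative_linear[OF hd] by (simp add: linear_scale)
  ultimately show ?thesis by (simp add: has_vector_derivative_def)
qed

lemma pd_eq:
  fixes G :: "complex \<times> complex \<Rightarrow> complex"
  assumes hd: "(G has_derivative G') (at x)"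
  shows "pd u G x = G' u"
proof -
  have "((\<lambda>t. G (x + t *\<^sub>R u)) has_vector_derivative G' u) (at 0)"
    using ld0[of G G' x 0 u] hd by simp
  thus ?thesis unfolding pd_def by (rule vector_derivative_at)
qed

lemma line_vd:
  fixes G :: "complex \<times> complex \<Rightarrow> complex"
  assumes "G differentiable at (y + s *\<^sub>R u)"
  shows "((\<lambda>t. G (y + t *\<^sub>R u)) has_vector_derivative pd u G (y + s *\<^sub>R u)) (at s)"
proof -
  obtain G' where hd: "(G has_derivative G') (at (y + s *\<^sub>R u))"
    using assms unfolding differentiable_def by blast
  show ?thesis using ld0[OF hd] pd_eq[OF hd] by simp
qed

lemma pd_lin:
  fixes F G :: "complex \<times> complex \<Rightarrow> complex"
  assumes "F differentiable at p" "G differentiable at p"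
  shows "pd w (\<lambda>x. a * F x + b * G x) p = a * pd w F p + b * pd w G p"
proof -
  obtain F' where f: "(F has_derivative F') (at p)"
    using assms unfolding differentiable_def by blast
  obtain G' where g: "(G has_derivative G') (at p)"
    using assms unfolding differentiable_def by blast
  have d: "((\<lambda>x. a * F x + b * G x) has_derivative (\<lambda>h. a * F' h + b * G' h)) (at p)"
    by (auto intro!: derivative_eq_intros f g)
  show ?thesis using pd_eq[OF d] pd_eq[OF f] pd_eq[OF g] by simp
qed


lemma half:
  fixes F :: "complex \<times> complex \<Rightarrow> complex"
  assumes h: "h > 0"
    and H: "\<And>s t. s \<in> {0..h} \<Longrightarrow> t \<in> {0..h} \<Longrightarrow>
        F differentiable at (p + s *\<^sub>R v + t *\<^sub>R w) \<and> pd v F differentiable at (p + s *\<^sub>R v + t *\<^sub>R w)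
        \<and> norm (pd w (pd v F) (p + s *\<^sub>R v + t *\<^sub>R w) - pd w (pd v F) p) \<le> e"
  shows "norm (F (p + h *\<^sub>R v + h *\<^sub>R w) - F (p + h *\<^sub>R v) - F (p + h *\<^sub>R w) + F p
            - (h * h) *\<^sub>R pd w (pd v F) p) \<le> 9 * h * h * e"
proof -
  define g where "g = pd v F"
  define c where "c = pd w g p"
  have seg: "closed_segment 0 h = {0..h}" using h by (simp add: closed_segment_eq_real_ivl)
  have A: "norm (g (p + s *\<^sub>R v + h *\<^sub>R w) - g (p + s *\<^sub>R v) - h *\<^sub>R c) \<le> h * (3 * e)"
    if s: "s \<in> {0..h}" for s
  proof -
    define x where "x = p + s *\<^sub>R v"
    have der: "((\<lambda>t. g (x + t *\<^sub>R w)) has_vector_derivative pd w g (x + t *\<^sub>R w)) (at t within {0..h})"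
      if "t \<in> {0..h}" for t
      using line_vd[of g x t w] H[OF s that] unfolding x_def g_def
      by (simp add: has_vector_derivative_at_within)
    have B: "norm (pd w g (x + t *\<^sub>R w) - pd w g (x + 0 *\<^sub>R w)) \<le> 2 * e" if "t \<in> {0..h}" for t
    proof -
      have 1: "norm (pd w g (x + t *\<^sub>R w) - c) \<le> e" using H[OF s that] unfolding x_def g_def c_def by simp
      have 2: "norm (pd w g (x + 0 *\<^sub>R w) - c) \<le> e" using H[OF s, of 0] h unfolding x_def g_def c_def by simp
      have "norm (pd w g (x + t *\<^sub>R w) - pd w g (x + 0 *\<^sub>R w)) \<le> norm (pd w g (x + t *\<^sub>R w) - c) + norm (pd w g (x + 0 *\<^sub>R w) - c)"
        by (metis norm_triangle_ineq4 diff_diff_eq2 diff_add_cancel add_diff_eq norm_minus_commute dist_norm dist_triangle)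
      thus ?thesis using 1 2 by simp
    qed
    have L: "norm (g (x + h *\<^sub>R w) - g (x + 0 *\<^sub>R w) - (h - 0) *\<^sub>R pd w g (x + 0 *\<^sub>R w)) \<le> norm (h - 0) * (2 * e)"
      by (rule vector_differentiable_bound_linearization[where S="{0..h}" and f="\<lambda>t. g (x + t *\<^sub>R w)"
            and f'="\<lambda>t. pd w g (x + t *\<^sub>R w)"]) (use der B seg h in auto)
    have 2: "norm (pd w g (x + 0 *\<^sub>R w) - c) \<le> e" using H[OF s, of 0] h unfolding x_def g_def c_def by simp
    have "g (x + h *\<^sub>R w) - g x - h *\<^sub>R c = (g (x + h *\<^sub>R w) - g (x + 0 *\<^sub>R w) - (h - 0) *\<^sub>R pd w g (x + 0 *\<^sub>R w))
          + h *\<^sub>R (pd w g (x + 0 *\<^sub>R w) - c)"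
      by (simp add: algebra_simps)
    note eq2 = this
    have Lx: "norm (g (x + h *\<^sub>R w) - g (x + 0 *\<^sub>R w) - (h - 0) *\<^sub>R pd w g (x + 0 *\<^sub>R w)) \<le> h * (2 * e)"
      using L h by simp
    have Y: "norm (h *\<^sub>R (pd w g (x + 0 *\<^sub>R w) - c)) \<le> h * e"
      using 2 h by (simp add: mult_left_mono)
    have "norm (g (x + h *\<^sub>R w) - g x - h *\<^sub>R c) \<le> h * (2 * e) + h * e"
      unfolding eq2 by (rule order_trans[OF norm_triangle_ineq add_mono[OF Lx Y]])
    thus ?thesis unfolding x_def by (simp add: algebra_simps)
  qed
  define u where "u s = F ((p + h *\<^sub>R w) + s *\<^sub>R v) - F (p + s *\<^sub>R v)" for s
  define u' where "u' s = g (p + s *\<^sub>R v + h *\<^sub>R w) - g (p + s *\<^sub>R v)" for s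
  have derU: "(u has_vector_derivative u' s) (at s within {0..h})" if "s \<in> {0..h}" for s
  proof -
    have a: "F differentiable at ((p + h *\<^sub>R w) + s *\<^sub>R v)"
      using H[OF that, of h] h by (simp add: add_ac)
    have b: "F differentiable at (p + s *\<^sub>R v)"
      using H[OF that, of 0] h by simp
    have "(u has_vector_derivative (pd v F ((p + h *\<^sub>R w) + s *\<^sub>R v) - pd v F (p + s *\<^sub>R v))) (at s)"
      unfolding u_def by (intro has_vector_derivative_diff line_vd a b)
    thus ?thesis unfolding u'_def g_def by (simp add: add_ac has_vector_derivative_at_within)
  qed
  have BU: "norm (u' s - u' 0) \<le> 6 * h * e" if "s \<in> {0..h}" for s
  proof -
    have 1: "norm (u' s - h *\<^sub>R c) \<le> h * (3 * e)" using A[OF that] unfolding u'_def .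
    have 2: "norm (u' 0 - h *\<^sub>R c) \<le> h * (3 * e)" using A[of 0] h unfolding u'_def by simp
    have "norm (u' s - u' 0) \<le> norm (u' s - h *\<^sub>R c) + norm (u' 0 - h *\<^sub>R c)"
      by (metis norm_triangle_ineq4 diff_diff_eq2 diff_add_cancel add_diff_eq norm_minus_commute dist_norm dist_triangle)
    thus ?thesis using 1 2 by simp
  qed
  have LU: "norm (u h - u 0 - (h - 0) *\<^sub>R u' 0) \<le> norm (h - 0) * (6 * h * e)"
    by (rule vector_differentiable_bound_linearization[where S="{0..h}"]) (use derU BU seg h in auto)
  have 2: "norm (u' 0 - h *\<^sub>R c) \<le> h * (3 * e)" using A[of 0] h unfolding u'_def by simp
  have eq: "F (p + h *\<^sub>R v + h *\<^sub>R w) - F (p + h *\<^sub>R v) - F (p + h *\<^sub>R w) + F p - (h * h) *\<^sub>R c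
      = (u h - u 0 - (h - 0) *\<^sub>R u' 0) + h *\<^sub>R (u' 0 - h *\<^sub>R c)"
    unfolding u_def by (simp add: algebra_simps)
  have Lx: "norm (u h - u 0 - (h - 0) *\<^sub>R u' 0) \<le> h * (6 * h * e)" using LU h by simp
  have Y: "norm (h *\<^sub>R (u' 0 - h *\<^sub>R c)) \<le> h * (h * (3 * e))" using 2 h by (simp add: mult_left_mono)
  have "norm (F (p + h *\<^sub>R v + h *\<^sub>R w) - F (p + h *\<^sub>R v) - F (p + h *\<^sub>R w) + F p - (h * h) *\<^sub>R c) \<le> h * (6 * h * e) + h * (h * (3 * e))"
    unfolding eq by (rule order_trans[OF norm_triangle_ineq add_mono[OF Lx Y]])
  thus ?thesis unfolding c_def g_def by (simp add: algebra_simps)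
qed

lemma near:
  fixes p v w :: "complex \<times> complex"
  assumes "s \<in> {0..h}" "t \<in> {0..h}" "h * (norm v + norm w) < d"
  shows "dist (p + s *\<^sub>R v + t *\<^sub>R w) p < d"
proof -
  have "dist (p + s *\<^sub>R v + t *\<^sub>R w) p = norm (s *\<^sub>R v + t *\<^sub>R w)" by (simp add: dist_norm)
  also have "\<dots> \<le> s * norm v + t * norm w"
    using assms norm_triangle_ineq[of "s *\<^sub>R v" "t *\<^sub>R w"] by simp
  also have "\<dots> \<le> h * norm v + h * norm w"
    using assms by (intro add_mono mult_right_mono) auto
  finally show ?thesis using assms by (simp add: algebra_simps)
qed

lemma clairaut:
  fixes F :: "complex \<times> complex \<Rightarrow> complex"
  assumes U: "open U" "p \<in> U"
    and dF: "\<forall>x\<in>U. F differentiable at x"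
    and dv: "\<forall>x\<in>U. pd v F differentiable at x"
    and dw: "\<forall>x\<in>U. pd w F differentiable at x"
    and c1: "isCont (pd w (pd v F)) p"
    and c2: "isCont (pd v (pd w F)) p"
  shows "pd w (pd v F) p = pd v (pd w F) p"
proof (rule ccontr)
  define a where "a = pd w (pd v F) p"
  define b where "b = pd v (pd w F) p"
  assume "\<not> ?thesis"
  hence ab: "a \<noteq> b" unfolding a_def b_def .
  define d where "d = norm (a - b)"
  have d: "d > 0" using ab unfolding d_def by simp
  define e where "e = d / 20"
  have e: "e > 0" using d unfolding e_def by simp
  obtain r where r: "r > 0" "ball p r \<subseteq> U" using U open_contains_ball by blast
  obtain d1 where d1: "d1 > 0" "\<And>x. dist x p < d1 \<Longrightarrow> dist (pd w (pd v F) x) (pd w (pd v F) p) < e"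
    using c1 e unfolding continuous_at_eps_delta by blast
  obtain d2 where d2: "d2 > 0" "\<And>x. dist x p < d2 \<Longrightarrow> dist (pd v (pd w F) x) (pd v (pd w F) p) < e"
    using c2 e unfolding continuous_at_eps_delta by blast
  define \<delta> where "\<delta> = min r (min d1 d2)"
  have \<delta>: "\<delta> > 0" using r d1 d2 unfolding \<delta>_def by simp
  define h where "h = \<delta> / (2 * (norm v + norm w + 1))"
  have h: "h > 0" using \<delta> unfolding h_def by (simp add: add_nonneg_pos)
  have hb: "h * (norm v + norm w) < \<delta>"
  proof -
    have "h * (norm v + norm w) \<le> h * (norm v + norm w + 1)" using h by simp
    also have "\<dots> = \<delta> / 2"
    proof -
      have "norm v + norm w + 1 > 0" by (simp add: add_nonneg_pos)
      thus ?thesis unfolding h_def by (simp add: field_simps)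
    qed
    finally show ?thesis using \<delta> by simp
  qed
  have hb2: "h * (norm w + norm v) < \<delta>" using hb by (simp add: add_ac)
  have N1: "norm (F (p + h *\<^sub>R v + h *\<^sub>R w) - F (p + h *\<^sub>R v) - F (p + h *\<^sub>R w) + F p
            - (h * h) *\<^sub>R a) \<le> 9 * h * h * e"
    unfolding a_def
  proof (rule half[OF h])
    fix s t assume st: "s \<in> {0..h}" "t \<in> {0..h}"
    have z: "dist (p + s *\<^sub>R v + t *\<^sub>R w) p < \<delta>" by (rule near[OF st hb])
    hence "p + s *\<^sub>R v + t *\<^sub>R w \<in> U" using r unfolding \<delta>_def by (auto simp: dist_commute)
    moreover have "dist (pd w (pd v F) (p + s *\<^sub>R v + t *\<^sub>R w)) (pd w (pd v F) p) < e"
      using d1(2) z unfolding \<delta>_def by simp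
    ultimately show "F differentiable at (p + s *\<^sub>R v + t *\<^sub>R w) \<and> pd v F differentiable at (p + s *\<^sub>R v + t *\<^sub>R w)
        \<and> norm (pd w (pd v F) (p + s *\<^sub>R v + t *\<^sub>R w) - pd w (pd v F) p) \<le> e"
      using dF dv by (simp add: dist_norm)
  qed
  have N2: "norm (F (p + h *\<^sub>R w + h *\<^sub>R v) - F (p + h *\<^sub>R w) - F (p + h *\<^sub>R v) + F p
            - (h * h) *\<^sub>R b) \<le> 9 * h * h * e"
    unfolding b_def
  proof (rule half[OF h])
    fix s t assume st: "s \<in> {0..h}" "t \<in> {0..h}"
    have z: "dist (p + s *\<^sub>R w + t *\<^sub>R v) p < \<delta>" by (rule near[OF st hb2])
    hence "p + s *\<^sub>R w + t *\<^sub>R v \<in> U" using r unfolding \<delta>_def by (auto simp: dist_commute)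
    moreover have "dist (pd v (pd w F) (p + s *\<^sub>R w + t *\<^sub>R v)) (pd v (pd w F) p) < e"
      using d2(2) z unfolding \<delta>_def by simp
    ultimately show "F differentiable at (p + s *\<^sub>R w + t *\<^sub>R v) \<and> pd w F differentiable at (p + s *\<^sub>R w + t *\<^sub>R v)
        \<and> norm (pd v (pd w F) (p + s *\<^sub>R w + t *\<^sub>R v) - pd v (pd w F) p) \<le> e"
      using dF dw by (simp add: dist_norm)
  qed
  define D where "D = F (p + h *\<^sub>R v + h *\<^sub>R w) - F (p + h *\<^sub>R v) - F (p + h *\<^sub>R w) + F p"
  have D2: "F (p + h *\<^sub>R w + h *\<^sub>R v) - F (p + h *\<^sub>R w) - F (p + h *\<^sub>R v) + F p = D"
    unfolding D_def by (simp add: algebra_simps)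
  have "(h * h) *\<^sub>R (a - b) = (D - (h * h) *\<^sub>R b) - (D - (h * h) *\<^sub>R a)"
    by (simp add: algebra_simps)
  hence "norm ((h * h) *\<^sub>R (a - b)) \<le> norm (D - (h * h) *\<^sub>R b) + norm (D - (h * h) *\<^sub>R a)"
    by (metis norm_triangle_ineq4)
  also have "\<dots> \<le> 9 * h * h * e + 9 * h * h * e"
    using add_mono[OF N2[unfolded D2] N1[folded D_def]] .
  finally have "h * h * d \<le> 18 * h * h * e" unfolding d_def using h by simp
  hence "h * h * d \<le> h * h * (18 / 20 * d)" unfolding e_def by simp
  hence "d \<le> 18 / 20 * d" using h by (simp add: mult_le_cancel_left_pos)
  thus False using d by simp
qed

theorem mainTheorem6:
  fixes \<psi> :: "complex \<times> complex \<Rightarrow> complex"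
    and lam :: complex
    and U :: "(complex \<times> complex) set"
  assumes lam: "lam \<noteq> 0"
    and smooth: "C2_on U \<psi>"
    and eq: "\<forall>p\<in>U. dqb (dq \<psi>) p * dzb (dz \<psi>) p - dzb (dq \<psi>) p * dz (dqb \<psi>) p
               = exp (dq \<psi> p + dqb \<psi> p) *
                 ((dqb (dq \<psi>) p)\<^sup>2 - dq (dq \<psi>) p * dqb (dqb \<psi>) p)"
    and c1: "\<forall>p\<in>U. exp (dqb \<psi> p) * (dqb (dqb \<psi>) p + dqb (dq \<psi>) p) = lam * dzb (dq \<psi>) p"
    and c2: "\<forall>p\<in>U. lam * exp (dq \<psi> p) * (dq (dq \<psi>) p + dqb (dq \<psi>) p) = dz (dqb \<psi>) p"
    and nz: "\<forall>p\<in>U. dqb (dq \<psi>) p \<noteq> 0"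
  shows "\<forall>p\<in>U. dzb (dz \<psi>) p
            = exp (dq \<psi> p + dqb \<psi> p) * (dq (dq \<psi>) p + 2 * dqb (dq \<psi>) p + dqb (dqb \<psi>) p)
          \<and> dzb (dz \<psi>) p = exp (dx \<psi> p) * dx (dx \<psi>) p"
proof (intro ballI conjI)
  fix p assume p: "p \<in> U"
  have oU: "open U" and dpsi: "\<psi> differentiable_on U"
    and dP: "\<forall>v\<in>real_dirs. pd v \<psi> differentiable_on U"
    and cP: "\<forall>v\<in>real_dirs. \<forall>w\<in>real_dirs. continuous_on U (pd w (pd v \<psi>))"
    using smooth unfolding C2_on_def by auto
  have r1: "(1,0) \<in> real_dirs" and ri: "(\<i>,0) \<in> real_dirs" by (auto simp: real_dirs_def)
  have dF: "\<forall>x\<in>U. \<psi> differentiable at x"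
    using dpsi oU by (simp add: differentiable_on_eq_differentiable_at)
  have dPa: "\<And>v. v \<in> real_dirs \<Longrightarrow> \<forall>x\<in>U. pd v \<psi> differentiable at x"
    using dP oU by (simp add: differentiable_on_eq_differentiable_at)
  have cPa: "\<And>v w. v \<in> real_dirs \<Longrightarrow> w \<in> real_dirs \<Longrightarrow> isCont (pd w (pd v \<psi>)) p"
    using cP oU p by (simp add: continuous_on_eq_continuous_at)
  define a where "a = dq (dq \<psi>) p"
  define A where "A = dqb (dq \<psi>) p"
  define b where "b = dqb (dqb \<psi>) p"
  define E where "E = exp (dq \<psi> p + dqb \<psi> p)"
  define X where "X = dzb (dq \<psi>) p"
  define Y where "Y = dz (dqb \<psi>) p"
  define Z where "Z = dzb (dz \<psi>) p"
  have e1: "A * Z - X * Y = E * (A\<^sup>2 - a * b)"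
    using eq p unfolding a_def A_def b_def E_def X_def Y_def Z_def by blast
  have e2: "exp (dqb \<psi> p) * (b + A) = lam * X"
    using c1 p unfolding A_def b_def X_def by blast
  have e3: "lam * exp (dq \<psi> p) * (a + A) = Y"
    using c2 p unfolding A_def a_def Y_def by blast
  have A0: "A \<noteq> 0" using nz p unfolding A_def by blast
  have XY: "X * Y = E * (a + A) * (b + A)"
  proof -
    have "X * Y = exp (dq \<psi> p) * (lam * X) * (a + A)" unfolding e3[symmetric] by (simp add: algebra_simps)
    also have "\<dots> = E * (a + A) * (b + A)" unfolding e2[symmetric] E_def by (simp add: exp_add algebra_simps)
    finally show ?thesis .
  qed
  have "A * Z = A * (E * (a + 2 * A + b))"
    using e1 XY by (simp add: algebra_simps power2_eq_square)
  hence Zv: "Z = E * (a + 2 * A + b)" using A0 by simp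
  thus "dzb (dz \<psi>) p = exp (dq \<psi> p + dqb \<psi> p) * (dq (dq \<psi>) p + 2 * dqb (dq \<psi>) p + dqb (dqb \<psi>) p)"
    unfolding Z_def E_def a_def A_def b_def .
  define P1 where "P1 = pd (1,0) \<psi>"
  define Pi where "Pi = pd (\<i>,0) \<psi>"
  have dqf: "dq \<psi> = (\<lambda>x. (1/2) * P1 x + (- \<i>/2) * Pi x)"
    unfolding dq_def P1_def Pi_def by (rule ext) (simp add: field_simps)
  have dqbf: "dqb \<psi> = (\<lambda>x. (1/2) * P1 x + (\<i>/2) * Pi x)"
    unfolding dqb_def P1_def Pi_def by (rule ext) (simp add: field_simps)
  have dP1: "P1 differentiable at p" using dPa[OF r1] p unfolding P1_def by blast
  have dPi: "Pi differentiable at p" using dPa[OF ri] p unfolding Pi_def by blast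
  have sym: "pd (\<i>,0) P1 p = pd (1,0) Pi p"
    unfolding P1_def Pi_def
    by (rule clairaut[OF oU p dF dPa[OF r1] dPa[OF ri] cPa[OF r1 ri] cPa[OF ri r1]])
  have L1: "\<And>w. pd w (dq \<psi>) p = (1/2) * pd w P1 p + (- \<i>/2) * pd w Pi p"
    unfolding dqf by (rule pd_lin[OF dP1 dPi])
  have L2: "\<And>w. pd w (dqb \<psi>) p = (1/2) * pd w P1 p + (\<i>/2) * pd w Pi p"
    unfolding dqbf by (rule pd_lin[OF dP1 dPi])
  have sum: "a + 2 * A + b = pd (1,0) P1 p"
    unfolding a_def A_def b_def dq_def[of "dq \<psi>"] dqb_def[of "dq \<psi>"] dqb_def[of "dqb \<psi>"] L1 L2 sym
    by (simp add: field_simps)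
  have dxv: "dx \<psi> p = dq \<psi> p + dqb \<psi> p" unfolding dx_def dq_def dqb_def by (simp add: field_simps)
  have dxx: "dx (dx \<psi>) p = pd (1,0) P1 p" unfolding dx_def P1_def ..
  show "dzb (dz \<psi>) p = exp (dx \<psi> p) * dx (dx \<psi>) p"
    using Zv unfolding Z_def dxv dxx sum[symmetric] E_def .
qed

end
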